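(* Let $\mathcal H$ be a finite-dimensional complex Hilbert space and $\mathcal G$ a finite set of Hermitian operators on $\mathcal H$. Let $\Pi_{\mathcal Z}$ denote the orthogonal projection (with respect to the Hilbert–Schmidt inner product $\mathrm{tr}(O_1^\dagger O_2)$ on $\mathrm{End}(\mathcal H)$) onto the center $\mathcal Z_{\mathcal G}$. Then $$\Pi_{\mathcal Z}(\mathfrak L(\mathcal G))=\mathrm{span}\big(\Pi_{\mathcal Z}(\mathcal G)\big).$$
   Context: $\mathfrak L(\mathcal G)$ is the dynamical Lie algebra: the complex linear span of $\mathcal G$ and all nested commutators $[h_{\alpha_1},[h_{\alpha_2},\dots,[h_{\alpha_{n-1}},h_{\alpha_n}]\dots]]$ with $h_{\alpha_i}\in\mathcal G$. The bond algebra $\mathcal A_{\mathcal G}$ is the von Neumann algebra generated by $\mathcal G$ (with identity, closed under complex linear combinations, products and adjoints), the commutant is $\mathcal C_{\mathcal G}=\{Q:[Q,h]=0\ \forall h\in\mathcal G\}$, and the center is $\mathcal Z_{\mathcal G}=\mathcal A_{\mathcal G}\cap\mathcal C_{\mathcal G}$. *)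

theory Defs
  imports "HOL-Analysis.Analysis"
begin

text \<open>Operators on the finite-dimensional complex Hilbert space H = C^n, with n = CARD('n),
  are represented as complex matrices of type complex^'n^'n.\<close>

definition cscale :: "complex \<Rightarrow> complex^'n^'n \<Rightarrow> complex^'n^'n" where
  "cscale c A = (\<chi> i j. c * A $ i $ j)"

definition adj :: "complex^'n^'n \<Rightarrow> complex^'n^'n" where
  "adj A = (\<chi> i j. cnj (A $ j $ i))"

definition hermitian :: "complex^'n^'n \<Rightarrow> bool" where
  "hermitian A \<longleftrightarrow> adj A = A"

definition commutator :: "complex^'n^'n \<Rightarrow> complex^'n^'n \<Rightarrow> complex^'n^'n" where
  "commutator A B = A ** B - B ** A"

definition cspan :: "(complex^'n^'n) set \<Rightarrow> (complex^'n^'n) set" where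
  "cspan S = {X. \<exists>F c. finite F \<and> F \<subseteq> S \<and> X = (\<Sum>A\<in>F. cscale (c A) A)}"

definition hs_inner :: "complex^'n^'n \<Rightarrow> complex^'n^'n \<Rightarrow> complex" where
  "hs_inner A B = trace (adj A ** B)"

inductive_set nested_comms :: "(complex^'n^'n) set \<Rightarrow> (complex^'n^'n) set" for G where
  base: "h \<in> G \<Longrightarrow> h \<in> nested_comms G"
| step: "h \<in> G \<Longrightarrow> X \<in> nested_comms G \<Longrightarrow> commutator h X \<in> nested_comms G"

definition dla :: "(complex^'n^'n) set \<Rightarrow> (complex^'n^'n) set" where
  "dla G = cspan (nested_comms G)"

text \<open>Bond algebra: the (von Neumann) *-algebra generated by G, with identity. In finite
  dimension no topological closure is needed.\<close>
inductive_set bond_algebra :: "(complex^'n^'n) set \<Rightarrow> (complex^'n^'n) set" for G where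
  gen: "h \<in> G \<Longrightarrow> h \<in> bond_algebra G"
| one: "mat 1 \<in> bond_algebra G"
| add: "A \<in> bond_algebra G \<Longrightarrow> B \<in> bond_algebra G \<Longrightarrow> A + B \<in> bond_algebra G"
| scale: "A \<in> bond_algebra G \<Longrightarrow> cscale c A \<in> bond_algebra G"
| mult: "A \<in> bond_algebra G \<Longrightarrow> B \<in> bond_algebra G \<Longrightarrow> A ** B \<in> bond_algebra G"
| adjoint: "A \<in> bond_algebra G \<Longrightarrow> adj A \<in> bond_algebra G"

definition commutant :: "(complex^'n^'n) set \<Rightarrow> (complex^'n^'n) set" where
  "commutant G = {Q. \<forall>h\<in>G. Q ** h = h ** Q}"

definition center :: "(complex^'n^'n) set \<Rightarrow> (complex^'n^'n) set" where
  "center G = bond_algebra G \<inter> commutant G"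

definition orth_proj :: "(complex^'n^'n) set \<Rightarrow> complex^'n^'n \<Rightarrow> complex^'n^'n" where
  "orth_proj Z X = (THE Y. Y \<in> Z \<and> (\<forall>W\<in>Z. hs_inner W (X - Y) = 0))"

end

theory Submission imports Defs begin

lemma cscale_mult_left: "cscale c A ** B = cscale c (A ** B)"
  by (simp add: cscale_def matrix_matrix_mult_def vec_eq_iff sum_distrib_left mult.assoc)
lemma cscale_mult_right: "B ** cscale c A = cscale c (B ** A)"
  by (simp add: cscale_def matrix_matrix_mult_def vec_eq_iff sum_distrib_left algebra_simps)
lemma cscale_add: "cscale c (A + B) = cscale c A + cscale c B"
  by (simp add: cscale_def vec_eq_iff algebra_simps)
lemma cscale_diff: "cscale c (A - B) = cscale c A - cscale c B"
  by (simp add: cscale_def vec_eq_iff algebra_simps)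
lemma cscale_zero[simp]: "cscale 0 A = 0" "cscale c 0 = 0"
  by (simp_all add: cscale_def vec_eq_iff)
lemma cscale_one[simp]: "cscale 1 A = A"
  by (simp_all add: cscale_def vec_eq_iff)
lemma cscale_cscale: "cscale c (cscale d A) = cscale (c*d) A"
  by (simp add: cscale_def vec_eq_iff)
lemma cscale_addc: "cscale (c+d) A = cscale c A + cscale d A"
  by (simp add: cscale_def vec_eq_iff algebra_simps)
lemma scaleR_cscale: "r *\<^sub>R (A::complex^'n^'n) = cscale (of_real r) A"
proof -
  have "(r *\<^sub>R A) $ i $ j = of_real r * A $ i $ j" for i j
    unfolding vector_scaleR_component by (rule scaleR_conv_of_real)
  then show ?thesis by (simp add: cscale_def vec_eq_iff)
qed
lemma matrix_add_rdistrib': "(B + C) ** A = B ** A + C ** A"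
  by (vector matrix_matrix_mult_def sum.distrib[symmetric] field_simps)
lemma adj_mult: "adj (A ** B) = adj B ** adj A"
  by (simp add: adj_def matrix_matrix_mult_def vec_eq_iff mult.commute)

lemma hs_Complex: "hs_inner A B = Complex (inner A B) (inner (cscale \<i> A) B)"
  unfolding hs_inner_def trace_def adj_def matrix_matrix_mult_def inner_vec_def cscale_def
  apply (simp add: complex_eq_iff Re_sum Im_sum inner_complex_def)
  apply (rule conjI)
   apply (subst sum.swap) apply (rule sum.cong; simp; rule sum.cong; simp; simp add: algebra_simps)
  apply (subst sum.swap) apply (rule sum.cong; simp; rule sum.cong; simp; simp add: algebra_simps)
  done

lemma hs_add: "hs_inner W (A + B) = hs_inner W A + hs_inner W B"
  by (simp add: hs_inner_def matrix_add_ldistrib trace_add)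
lemma hs_diff: "hs_inner W (A - B) = hs_inner W A - hs_inner W B"
  by (simp add: hs_inner_def trace_def matrix_matrix_mult_def sum_subtractf right_diff_distrib)
lemma hs_cscale: "hs_inner W (cscale c A) = c * hs_inner W A"
  unfolding hs_inner_def cscale_mult_right by (simp add: trace_def cscale_def sum_distrib_left)


lemma hs_zero[simp]: "hs_inner W 0 = 0"
  using hs_cscale[of W 0 0] by simp

lemma hs_self_zero: "hs_inner V V = 0 \<Longrightarrow> V = 0"
  by (simp add: hs_Complex complex_eq_iff)

lemma cscale_sum: "cscale d (sum f F) = (\<Sum>x\<in>F. cscale d (f x))"
  by (induction F rule: infinite_finite_induct) (simp_all add: cscale_add)

definition csub :: "(complex^'n^'n) set \<Rightarrow> bool" where
  "csub Z \<longleftrightarrow> 0 \<in> Z \<and> (\<forall>A\<in>Z. \<forall>B\<in>Z. A + B \<in> Z) \<and> (\<forall>c. \<forall>A\<in>Z. cscale c A \<in> Z)"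

lemma csub_diff: "csub Z \<Longrightarrow> A \<in> Z \<Longrightarrow> B \<in> Z \<Longrightarrow> A - B \<in> Z"
proof -
  assume a: "csub Z" "A \<in> Z" "B \<in> Z"
  have "A - B = A + cscale (-1) B" by (simp add: cscale_def vec_eq_iff)
  then show ?thesis using a unfolding csub_def by metis
qed

lemma csub_subspace: "csub Z \<Longrightarrow> subspace Z"
  unfolding csub_def subspace_def by (simp add: scaleR_cscale)

lemma proj_exists:
  assumes "csub Z"
  shows "\<exists>Y. Y \<in> Z \<and> (\<forall>W\<in>Z. hs_inner W (X - Y) = 0)"
proof -
  have sp: "span Z = Z" using csub_subspace[OF assms] by (simp add: span_eq_iff)
  obtain y z where y: "y \<in> span Z" and o: "\<And>w. w \<in> span Z \<Longrightarrow> orthogonal z w" and e: "X = y + z"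
    using orthogonal_subspace_decomp_exists[of Z X] by metis
  have "hs_inner W (X - y) = 0" if "W \<in> Z" for W
  proof -
    have "cscale \<i> W \<in> Z" using that assms unfolding csub_def by blast
    then have "inner z (cscale \<i> W) = 0" "inner z W = 0" using o that sp unfolding orthogonal_def by auto
    moreover have "X - y = z" using e by simp
    ultimately show ?thesis by (simp add: hs_Complex inner_commute complex_eq_iff)
  qed
  then show ?thesis using y sp by blast
qed

lemma proj_unique:
  assumes "csub Z" "Y \<in> Z" "\<forall>W\<in>Z. hs_inner W (X - Y) = 0"
    "Y' \<in> Z" "\<forall>W\<in>Z. hs_inner W (X - Y') = 0"
  shows "Y' = Y"
proof -
  have V: "Y - Y' \<in> Z" using csub_diff assms by blast
  have "(X - Y') - (X - Y) = Y - Y'" by simp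
  then have "hs_inner (Y - Y') (Y - Y') = hs_inner (Y - Y') (X - Y') - hs_inner (Y - Y') (X - Y)"
    by (metis hs_diff)
  also have "\<dots> = 0" using assms V by simp
  finally have "Y - Y' = 0" by (rule hs_self_zero)
  then show ?thesis by simp
qed

lemma proj_char:
  assumes "csub Z" "Y \<in> Z" "\<forall>W\<in>Z. hs_inner W (X - Y) = 0"
  shows "orth_proj Z X = Y"
  unfolding orth_proj_def
proof (rule the_equality)
  show "Y \<in> Z \<and> (\<forall>W\<in>Z. hs_inner W (X - Y) = 0)" using assms(2,3) by (rule conjI)
next
  fix Y' assume "Y' \<in> Z \<and> (\<forall>W\<in>Z. hs_inner W (X - Y') = 0)"
  then show "Y' = Y" using proj_unique[OF assms, of Y'] by (elim conjE)
qed

lemma proj_props: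
  assumes "csub Z"
  shows "orth_proj Z X \<in> Z \<and> (\<forall>W\<in>Z. hs_inner W (X - orth_proj Z X) = 0)"
proof -
  obtain Y where "Y \<in> Z" "\<forall>W\<in>Z. hs_inner W (X - Y) = 0" using proj_exists[OF assms] by blast
  then show ?thesis using proj_char[OF assms] by simp
qed

lemma proj_add:
  assumes "csub Z"
  shows "orth_proj Z (A + B) = orth_proj Z A + orth_proj Z B"
proof (rule proj_char[OF assms])
  show "orth_proj Z A + orth_proj Z B \<in> Z" using proj_props[OF assms] assms unfolding csub_def by blast
  show "\<forall>W\<in>Z. hs_inner W (A + B - (orth_proj Z A + orth_proj Z B)) = 0"
  proof
    fix W assume "W \<in> Z"
    have "A + B - (orth_proj Z A + orth_proj Z B) = (A - orth_proj Z A) + (B - orth_proj Z B)" by simp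
    moreover have "hs_inner W (A - orth_proj Z A) = 0" "hs_inner W (B - orth_proj Z B) = 0"
      using proj_props[OF assms] \<open>W \<in> Z\<close> by auto
    ultimately show "hs_inner W (A + B - (orth_proj Z A + orth_proj Z B)) = 0"
      by (simp only: hs_add) simp
  qed
qed

lemma proj_scale:
  assumes "csub Z"
  shows "orth_proj Z (cscale c A) = cscale c (orth_proj Z A)"
proof (rule proj_char[OF assms])
  show "cscale c (orth_proj Z A) \<in> Z" using proj_props[OF assms] assms unfolding csub_def by blast
  show "\<forall>W\<in>Z. hs_inner W (cscale c A - cscale c (orth_proj Z A)) = 0"
  proof
    fix W assume "W \<in> Z"
    then show "hs_inner W (cscale c A - cscale c (orth_proj Z A)) = 0"
      using proj_props[OF assms] by (simp add: hs_cscale cscale_diff[symmetric])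
  qed
qed

lemma proj_zero:
  assumes "csub Z"
  shows "orth_proj Z 0 = 0"
  using proj_scale[OF assms, of 0 0] by simp

lemma cspan_min:
  assumes "csub T" "S \<subseteq> T"
  shows "cspan S \<subseteq> T"
proof
  fix X assume "X \<in> cspan S"
  then obtain F c where F: "finite F" "F \<subseteq> S" and X: "X = (\<Sum>A\<in>F. cscale (c A) A)"
    unfolding cspan_def by blast
  have "F \<subseteq> S \<Longrightarrow> (\<Sum>A\<in>F. cscale (c A) A) \<in> T" using F(1)
  proof (induction F rule: finite_induct)
    case empty then show ?case using assms unfolding csub_def by simp
  next
    case (insert x F)
    then have "cscale (c x) x \<in> T" "(\<Sum>A\<in>F. cscale (c A) A) \<in> T"
      using assms unfolding csub_def by auto
    then show ?case using insert assms unfolding csub_def by simp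
  qed
  then show "X \<in> T" using F X by simp
qed

lemma cspan_base: "S \<subseteq> cspan S"
proof
  fix A assume "A \<in> S"
  then show "A \<in> cspan S" unfolding cspan_def
    by (intro CollectI exI[of _ "{A}"] exI[of _ "\<lambda>_. 1"]) simp
qed

lemma cspan_csub: "csub (cspan S)"
  unfolding csub_def
proof (intro conjI ballI allI)
  show "0 \<in> cspan S" unfolding cspan_def by (intro CollectI exI[of _ "{}"]) simp
next
  fix A B assume "A \<in> cspan S" "B \<in> cspan S"
  then obtain F1 c1 F2 c2 where F: "finite F1" "F1 \<subseteq> S" "A = (\<Sum>x\<in>F1. cscale (c1 x) x)"
    "finite F2" "F2 \<subseteq> S" "B = (\<Sum>x\<in>F2. cscale (c2 x) x)"
    unfolding cspan_def by blast
  define c where "c x = (if x \<in> F1 then c1 x else 0) + (if x \<in> F2 then c2 x else 0)" for x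
  have "(\<Sum>x\<in>F1 \<union> F2. cscale (c x) x) =
     (\<Sum>x\<in>F1 \<union> F2. cscale (if x \<in> F1 then c1 x else 0) x) + (\<Sum>x\<in>F1 \<union> F2. cscale (if x \<in> F2 then c2 x else 0) x)"
    unfolding c_def cscale_addc by (simp add: sum.distrib)
  also have "(\<Sum>x\<in>F1 \<union> F2. cscale (if x \<in> F1 then c1 x else 0) x) = A"
    unfolding F(3) by (rule sum.mono_neutral_cong_right) (use F in auto)
  also have "(\<Sum>x\<in>F1 \<union> F2. cscale (if x \<in> F2 then c2 x else 0) x) = B"
    unfolding F(6) by (rule sum.mono_neutral_cong_right) (use F in auto)
  finally show "A + B \<in> cspan S" unfolding cspan_def
    by (intro CollectI exI[of _ "F1 \<union> F2"] exI[of _ c]) (use F in auto)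
next
  fix d A assume "A \<in> cspan S"
  then obtain F c where F: "finite F" "F \<subseteq> S" "A = (\<Sum>x\<in>F. cscale (c x) x)"
    unfolding cspan_def by blast
  have "cscale d A = (\<Sum>x\<in>F. cscale (d * c x) x)"
    unfolding F(3) cscale_sum cscale_cscale ..
  then show "cscale d A \<in> cspan S" unfolding cspan_def
    by (intro CollectI exI[of _ F] exI[of _ "\<lambda>x. d * c x"]) (use F in auto)
qed

lemma image_cspan:
  assumes z: "P 0 = 0" and a: "\<And>A B. P (A + B) = P A + P B"
    and s: "\<And>c A. P (cscale c A) = cscale c (P A)"
  shows "P ` cspan S = cspan (P ` S)"
proof
  have "cspan S \<subseteq> {X. P X \<in> cspan (P ` S)}"
  proof (rule cspan_min)
    show "csub {X. P X \<in> cspan (P ` S)}"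
      using cspan_csub[of "P ` S"] unfolding csub_def by (simp add: z a s)
    show "S \<subseteq> {X. P X \<in> cspan (P ` S)}" using cspan_base by blast
  qed
  then show "P ` cspan S \<subseteq> cspan (P ` S)" by blast
next
  show "cspan (P ` S) \<subseteq> P ` cspan S"
  proof (rule cspan_min)
    show "csub (P ` cspan S)"
      unfolding csub_def
    proof (intro conjI ballI allI)
      show "0 \<in> P ` cspan S" using cspan_csub[of S] z unfolding csub_def by force
    next
      fix A B assume "A \<in> P ` cspan S" "B \<in> P ` cspan S"
      then obtain A' B' where "A' \<in> cspan S" "B' \<in> cspan S" "A = P A'" "B = P B'" by blast
      then show "A + B \<in> P ` cspan S" using cspan_csub[of S] a unfolding csub_def
        by (metis image_eqI)
    next
      fix c A assume "A \<in> P ` cspan S"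
      then obtain A' where "A' \<in> cspan S" "A = P A'" by blast
      then show "cscale c A \<in> P ` cspan S" using cspan_csub[of S] s unfolding csub_def
        by (metis image_eqI)
    qed
    show "P ` S \<subseteq> P ` cspan S" using cspan_base by blast
  qed
qed

lemma center_csub: "csub (center G)"
  unfolding csub_def center_def commutant_def
proof (intro conjI ballI allI)
  have "cscale 0 (mat 1) \<in> bond_algebra G" by (intro bond_algebra.scale bond_algebra.one)
  then show "0 \<in> bond_algebra G \<inter> {Q. \<forall>h\<in>G. Q ** h = h ** Q}" by simp
next
  fix A B assume "A \<in> bond_algebra G \<inter> {Q. \<forall>h\<in>G. Q ** h = h ** Q}" "B \<in> bond_algebra G \<inter> {Q. \<forall>h\<in>G. Q ** h = h ** Q}"
  then show "A + B \<in> bond_algebra G \<inter> {Q. \<forall>h\<in>G. Q ** h = h ** Q}"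
    by (auto intro: bond_algebra.add simp: matrix_add_rdistrib' matrix_add_ldistrib)
next
  fix c A assume "A \<in> bond_algebra G \<inter> {Q. \<forall>h\<in>G. Q ** h = h ** Q}"
  then show "cscale c A \<in> bond_algebra G \<inter> {Q. \<forall>h\<in>G. Q ** h = h ** Q}"
    by (auto intro: bond_algebra.scale simp: cscale_mult_left cscale_mult_right)
qed

lemma hs_commutator:
  assumes "W ** h = h ** W" "hermitian h"
  shows "hs_inner W (commutator h X) = 0"
proof -
  have hh: "adj h = h" using assms(2) unfolding hermitian_def .
  have c: "h ** adj W = adj W ** h"
    using arg_cong[OF assms(1), of adj] by (simp add: adj_mult hh)
  have "trace (adj W ** (X ** h)) = trace (h ** (adj W ** X))"
    by (simp add: matrix_mul_assoc trace_mul_sym[of "adj W ** X" h])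
  also have "\<dots> = trace (adj W ** (h ** X))"
    by (simp add: matrix_mul_assoc c)
  finally show ?thesis
    unfolding commutator_def hs_diff by (simp add: hs_inner_def)
qed

theorem lemma5:
  fixes G :: "(complex^'n^'n) set"
  assumes "finite G"
    and "\<forall>h\<in>G. hermitian h"
  shows "orth_proj (center G) ` dla G = cspan (orth_proj (center G) ` G)"
proof -
  let ?Z = "center G"
  let ?P = "orth_proj ?Z"
  have cz: "csub ?Z" by (rule center_csub)
  have dla: "?P ` dla G = cspan (?P ` nested_comms G)"
    unfolding dla_def
    by (rule image_cspan) (simp_all add: proj_zero[OF cz] proj_add[OF cz] proj_scale[OF cz])
  have sub1: "?P ` nested_comms G \<subseteq> cspan (?P ` G)"
  proof
    fix Y assume "Y \<in> ?P ` nested_comms G"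
    then obtain X where X: "X \<in> nested_comms G" "Y = ?P X" by blast
    from X(1) have "?P X \<in> cspan (?P ` G)"
    proof cases
      case base then show ?thesis using cspan_base by blast
    next
      case (step h X')
      have "?P X = 0"
      proof (rule proj_char[OF cz])
        show "0 \<in> ?Z" using cz unfolding csub_def by blast
        show "\<forall>W\<in>?Z. hs_inner W (X - 0) = 0"
        proof
          fix W assume "W \<in> ?Z"
          then have "W ** h = h ** W" using step unfolding center_def commutant_def by blast
          moreover have "hermitian h" using step(2) assms(2) by blast
          ultimately have "hs_inner W (commutator h X') = 0" by (rule hs_commutator)
          then show "hs_inner W (X - 0) = 0" using step(1) by simp
        qed
      qed
      then show ?thesis using cspan_csub[of "?P ` G"] unfolding csub_def by simp
    qed
    then show "Y \<in> cspan (?P ` G)" using X by simp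
  qed
  have "cspan (?P ` nested_comms G) \<subseteq> cspan (?P ` G)"
    by (rule cspan_min[OF cspan_csub sub1])
  moreover have "cspan (?P ` G) \<subseteq> cspan (?P ` nested_comms G)"
  proof (rule cspan_min[OF cspan_csub])
    have "G \<subseteq> nested_comms G" by (auto intro: nested_comms.base)
    then show "?P ` G \<subseteq> cspan (?P ` nested_comms G)" using cspan_base by blast
  qed
  ultimately have "cspan (?P ` nested_comms G) = cspan (?P ` G)" by (rule subset_antisym)
  with dla show ?thesis by (rule trans)
qed

end
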